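(* Fix $c_p>0$, a finite set $\mathcal{T}$ of window lengths, $n\ge1$ and a fixed sequence of inter-arrival times $x_1,\dots,x_n>0$. Consider a randomized custom keep-alive policy which, given report $\hat\theta\ge0$, produces random window lengths $\tau_{\hat\theta,\mathcal{H}_{i-1}}$ used for arrival $i$, and charge externality payments $p_i=wm(\tau_{\hat\theta,\mathcal{H}_{i-1}},x_i)$. Define $$\kappa(\hat\theta)=\Big(\mathbb{E}\sum_{i=1}^n wm(\tau_{\hat\theta,\mathcal{H}_{i-1}},x_i),\ \mathbb{E}\sum_{i=1}^n cs(\tau_{\hat\theta,\mathcal{H}_{i-1}},x_i)\Big),\qquad \kappa(\tau)=\Big(\sum_{i=1}^n wm(\tau,x_i),\ \sum_{i=1}^n cs(\tau,x_i)\Big)\ (\tau\in\mathcal{T}),$$ and $$D(\theta)=\max\Big(0,\ \sup_{\hat\theta\ge0}\ \min_{\tau\in\mathcal{T}}\big(\kappa(\tau)-\kappa(\hat\theta)\big)\cdot(1,\theta)\Big).$$ Suppose $R_n$ bounds the policy's expected regret under truthful reporting: for every $\theta\ge0$, $\kappa(\theta)\cdot(1,\theta)-\min_{\tau\in\mathcal{T}}\kappa(\tau)\cdot(1,\theta)\le R_n$. Then for every true type $\theta\ge0$ and every report $\hat\theta\ge0$, the customer's expected total cost satisfies $$\mathbb{E}\sum_{i=1}^n \mathrm{cost}_i(\text{report }\theta)\le\mathbb{E}\sum_{i=1}^n\mathrm{cost}_i(\text{report }\hat\theta)+R_n+D(\theta).$$ Consequently, externality payments are $\varepsilon$-IC with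 $\varepsilon=\frac1n\big(R_n+\sup_{\theta}D(\theta)\big)$.
   Context: For a window length $\tau\in[0,\infty]$ and inter-arrival time $x>0$: $cs(\tau,x)=1$ if $x>\tau$ and $0$ otherwise; $wm(\tau,x)=c_px$ if $x\le\tau$ and $c_p\tau$ if $x>\tau$. $\mathcal{H}_{i}=(x_1,\dots,x_i)$ is the history of inter-arrival times. A customer with true cold-start cost $\theta\ge0$ reporting $\hat\theta$ incurs on arrival $i$ the cost $\mathrm{cost}_i=p_i+\theta\cdot cs(\tau_{\hat\theta,\mathcal{H}_{i-1}},x_i)$. Expectations are over the randomness of the policy. A payment rule is $\varepsilon$-IC if for all $\theta,\hat\theta$ the expected total cost of truthful reporting is at most the expected total cost of reporting $\hat\theta$ plus $n\varepsilon$. (An example of such a policy is exponential weights, choosing $\tau_j\in\mathcal{T}$ with probability proportional to $e^{-L_{i-1}(\tau_j,\mathcal{H}_{i-1},\hat\theta)}$, where $L_{i-1}(\tau,\mathcal{H}_{i-1},\theta)=\sum_{j\le i-1}wm(\tau,x_j)+\theta\sum_{j\le i-1}cs(\tau,x_j)$.) *)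

theory Defs
  imports "HOL-Probability.Probability"
begin

text \<open>Window lengths live in [0,\<infinity>], modelled as nonnegative extended reals.\<close>

definition cs :: "ereal \<Rightarrow> real \<Rightarrow> real" where
  "cs \<tau> x = (if ereal x > \<tau> then 1 else 0)"

definition wm :: "real \<Rightarrow> ereal \<Rightarrow> real \<Rightarrow> real" where
  "wm c_p \<tau> x = (if ereal x \<le> \<tau> then c_p * x else c_p * real_of_ereal \<tau>)"

definition hist :: "(nat \<Rightarrow> real) \<Rightarrow> nat \<Rightarrow> real list" where
  "hist x i = map x [1..<Suc i]"

text \<open>A randomized policy: on probability space M, for report th and history H,
  the random window length is tau th H (a random variable on M).\<close>

definition exp_wm :: "'a measure \<Rightarrow> (real \<Rightarrow> real list \<Rightarrow> 'a \<Rightarrow> ereal) \<Rightarrow> real \<Rightarrow> (nat \<Rightarrow> real)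
    \<Rightarrow> nat \<Rightarrow> real \<Rightarrow> real" where
  "exp_wm M tau c_p x n th =
     (\<integral>\<omega>. (\<Sum>i=1..n. wm c_p (tau th (hist x (i - 1)) \<omega>) (x i)) \<partial>M)"

definition exp_cs :: "'a measure \<Rightarrow> (real \<Rightarrow> real list \<Rightarrow> 'a \<Rightarrow> ereal) \<Rightarrow> (nat \<Rightarrow> real)
    \<Rightarrow> nat \<Rightarrow> real \<Rightarrow> real" where
  "exp_cs M tau x n th =
     (\<integral>\<omega>. (\<Sum>i=1..n. cs (tau th (hist x (i - 1)) \<omega>) (x i)) \<partial>M)"

text \<open>Expected total cost of a customer with true type theta reporting th, under
  externality payments p_i = wm(tau, x_i).\<close>
definition exp_cost :: "'a measure \<Rightarrow> (real \<Rightarrow> real list \<Rightarrow> 'a \<Rightarrow> ereal) \<Rightarrow> real \<Rightarrow> (nat \<Rightarrow> real)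
    \<Rightarrow> nat \<Rightarrow> real \<Rightarrow> real \<Rightarrow> real" where
  "exp_cost M tau c_p x n theta th =
     (\<integral>\<omega>. (\<Sum>i=1..n. wm c_p (tau th (hist x (i - 1)) \<omega>) (x i)
                      + theta * cs (tau th (hist x (i - 1)) \<omega>) (x i)) \<partial>M)"

definition tot_wm :: "real \<Rightarrow> (nat \<Rightarrow> real) \<Rightarrow> nat \<Rightarrow> ereal \<Rightarrow> real" where
  "tot_wm c_p x n \<tau> = (\<Sum>i=1..n. wm c_p \<tau> (x i))"

definition tot_cs :: "(nat \<Rightarrow> real) \<Rightarrow> nat \<Rightarrow> ereal \<Rightarrow> real" where
  "tot_cs x n \<tau> = (\<Sum>i=1..n. cs \<tau> (x i))"

definition Dgap :: "'a measure \<Rightarrow> (real \<Rightarrow> real list \<Rightarrow> 'a \<Rightarrow> ereal) \<Rightarrow> real \<Rightarrow> ereal set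
    \<Rightarrow> (nat \<Rightarrow> real) \<Rightarrow> nat \<Rightarrow> real \<Rightarrow> real" where
  "Dgap M tau c_p T x n theta =
     max 0 (SUP th\<in>{0..}. Min ((\<lambda>\<tau>. (tot_wm c_p x n \<tau> - exp_wm M tau c_p x n th)
                                  + theta * (tot_cs x n \<tau> - exp_cs M tau x n th)) ` T))"

text \<open>epsilon-IC with epsilon possibly +infinity (extended real).\<close>
definition eps_IC :: "'a measure \<Rightarrow> (real \<Rightarrow> real list \<Rightarrow> 'a \<Rightarrow> ereal) \<Rightarrow> real \<Rightarrow> (nat \<Rightarrow> real)
    \<Rightarrow> nat \<Rightarrow> ereal \<Rightarrow> bool" where
  "eps_IC M tau c_p x n \<epsilon> \<longleftrightarrow>
     (\<forall>theta\<ge>0. \<forall>th\<ge>0. ereal (exp_cost M tau c_p x n theta theta)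
        \<le> ereal (exp_cost M tau c_p x n theta th) + ereal (real n) * \<epsilon>)"

end

theory Submission
  imports Defs
begin

lemma wm_meas: "f \<in> borel_measurable M \<Longrightarrow> (\<lambda>\<omega>. wm c (f \<omega>) y) \<in> borel_measurable M"
proof -
  assume f: "f \<in> borel_measurable M"
  have "{\<omega> \<in> space M. ereal y \<le> f \<omega>} \<in> sets M"
    using f by measurable
  then show ?thesis unfolding wm_def using f by measurable
qed
lemma cs_meas: "f \<in> borel_measurable M \<Longrightarrow> (\<lambda>\<omega>. cs (f \<omega>) y) \<in> borel_measurable M"
  unfolding cs_def by measurable
lemma wm_bnd: "c > 0 \<Longrightarrow> t \<ge> 0 \<Longrightarrow> norm (wm c t y) \<le> c * \<bar>y\<bar>"
  unfolding wm_def apply (cases t) apply (auto simp: abs_mult)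
  done
lemma wm_nn: "c > 0 \<Longrightarrow> t \<ge> 0 \<Longrightarrow> y > 0 \<Longrightarrow> wm c t y \<ge> 0"
  unfolding wm_def by (cases t) auto
lemma cs_bnd: "norm (cs t y) \<le> 1" unfolding cs_def by auto
lemma ee: "(n::real) > 0 \<Longrightarrow> z \<noteq> -\<infinity> \<Longrightarrow> ereal n * (z / ereal n) = z"
  by (cases z) auto

theorem lemma6p4:
  fixes M :: "'a measure" and tau :: "real \<Rightarrow> real list \<Rightarrow> 'a \<Rightarrow> ereal"
    and c_p :: real and T :: "ereal set" and n :: nat and x :: "nat \<Rightarrow> real" and R :: real
  assumes cp: "c_p > 0"
    and T: "finite T" "T \<noteq> {}" "\<forall>\<tau>\<in>T. \<tau> \<ge> 0"
    and n: "n \<ge> 1"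
    and x: "\<forall>i\<in>{1..n}. x i > 0"
    and P: "prob_space M"
    and meas: "\<And>th H. tau th H \<in> borel_measurable M"
    and nonneg: "\<And>th H \<omega>. \<omega> \<in> space M \<Longrightarrow> tau th H \<omega> \<ge> 0"
    and regret: "\<forall>theta\<ge>0. exp_wm M tau c_p x n theta + theta * exp_cs M tau x n theta
                   - Min ((\<lambda>\<tau>. tot_wm c_p x n \<tau> + theta * tot_cs x n \<tau>) ` T) \<le> R"
  shows "(\<forall>theta\<ge>0. \<forall>th\<ge>0. exp_cost M tau c_p x n theta theta
            \<le> exp_cost M tau c_p x n theta th + R + Dgap M tau c_p T x n theta)
       \<and> eps_IC M tau c_p x n
           ((ereal R + (SUP theta\<in>{0..}. ereal (Dgap M tau c_p T x n theta))) / ereal (real n))"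
proof -
  interpret prob_space M by (rule P)
  define A where "A th theta = exp_wm M tau c_p x n th + theta * exp_cs M tau x n th" for th theta
  define K where "K theta \<tau> = tot_wm c_p x n \<tau> + theta * tot_cs x n \<tau>" for theta \<tau>
  have iw: "integrable M (\<lambda>\<omega>. wm c_p (tau th H \<omega>) y)" for th H y
    by (rule integrable_const_bound[where B="c_p * \<bar>y\<bar>"])
       (auto intro!: AE_I2 wm_meas meas simp del: real_norm_def dest: wm_bnd[OF cp, of _ y, OF nonneg])
  have ic: "integrable M (\<lambda>\<omega>. cs (tau th H \<omega>) y)" for th H y
    by (rule integrable_const_bound[where B=1]) (rule AE_I2, rule cs_bnd, rule cs_meas[OF meas])
  have cost: "exp_cost M tau c_p x n theta th = A th theta" for theta th
  proof -
    let ?w = "\<lambda>i \<omega>. wm c_p (tau th (hist x (i - 1)) \<omega>) (x i)"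
    let ?c = "\<lambda>i \<omega>. cs (tau th (hist x (i - 1)) \<omega>) (x i)"
    have "(\<integral>\<omega>. (\<Sum>i=1..n. ?w i \<omega> + theta * ?c i \<omega>) \<partial>M)
        = (\<Sum>i=1..n. (\<integral>\<omega>. ?w i \<omega> + theta * ?c i \<omega> \<partial>M))"
      by (rule Bochner_Integration.integral_sum) (intro Bochner_Integration.integrable_add integrable_mult_right iw ic)
    also have "\<dots> = (\<Sum>i=1..n. (\<integral>\<omega>. ?w i \<omega> \<partial>M) + theta * (\<integral>\<omega>. ?c i \<omega> \<partial>M))"
      by (intro sum.cong refl, subst Bochner_Integration.integral_add)
         (auto intro!: integrable_mult_right iw ic)
    also have "\<dots> = (\<Sum>i=1..n. (\<integral>\<omega>. ?w i \<omega> \<partial>M)) + theta * (\<Sum>i=1..n. (\<integral>\<omega>. ?c i \<omega> \<partial>M))"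
      by (simp only: sum.distrib sum_distrib_left)
    also have "\<dots> = A th theta"
      unfolding A_def exp_wm_def exp_cs_def
      by (subst (1 2) Bochner_Integration.integral_sum) (auto intro!: iw ic)
    finally show ?thesis unfolding exp_cost_def .
  qed
  have ewnn: "exp_wm M tau c_p x n th \<ge> 0" for th
    unfolding exp_wm_def
    by (rule integral_nonneg_AE, rule AE_I2, rule sum_nonneg, rule wm_nn[OF cp nonneg])
       (use x in auto)
  have ecnn: "exp_cs M tau x n th \<ge> 0" for th
    unfolding exp_cs_def
    by (rule integral_nonneg_AE, rule AE_I2, rule sum_nonneg) (simp add: cs_def)
  have main: "A theta theta \<le> A th theta + R + Dgap M tau c_p T x n theta"
    if th0: "theta \<ge> 0" "th \<ge> 0" for theta th
  proof -
    define F where "F t = Min ((\<lambda>\<tau>. (tot_wm c_p x n \<tau> - exp_wm M tau c_p x n t)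
                                  + theta * (tot_cs x n \<tau> - exp_cs M tau x n t)) ` T)" for t
    obtain \<tau>0 where t0: "\<tau>0 \<in> T" using T by auto
    have Fle: "F t \<le> K theta \<tau>0" if "t \<ge> 0" for t
    proof -
      have "F t \<le> (tot_wm c_p x n \<tau>0 - exp_wm M tau c_p x n t)
                                  + theta * (tot_cs x n \<tau>0 - exp_cs M tau x n t)"
        unfolding F_def using T t0 by (intro Min_le) auto
      also have "\<dots> \<le> K theta \<tau>0" unfolding K_def using ewnn[of t] ecnn[of t] th0
        by (simp add: algebra_simps mult_nonneg_nonneg)
      finally show ?thesis .
    qed
    have bdd: "bdd_above (F ` {0..})" using Fle by (auto intro!: bdd_aboveI)
    have "F th \<le> (SUP t\<in>{0..}. F t)" using bdd th0 by (intro cSUP_upper) auto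
    hence FD: "F th \<le> Dgap M tau c_p T x n theta" unfolding Dgap_def F_def by simp
    have Feq: "F th = Min (K theta ` T) - A th theta"
    proof -
      have "F th = Min ((\<lambda>v. v - A th theta) ` (K theta ` T))"
        unfolding F_def K_def A_def image_image by (simp add: algebra_simps)
      also have "\<dots> = Min (K theta ` T) - A th theta"
        using T by (intro mono_Min_commute[symmetric]) (auto simp: mono_def)
      finally show ?thesis .
    qed
    have "A theta theta - Min (K theta ` T) \<le> R" using regret th0 unfolding A_def K_def by auto
    thus ?thesis using FD Feq by linarith
  qed
  have D0: "Dgap M tau c_p T x n theta \<ge> 0" for theta unfolding Dgap_def by simp
  show ?thesis
  proof
    show "\<forall>theta\<ge>0. \<forall>th\<ge>0. exp_cost M tau c_p x n theta theta
            \<le> exp_cost M tau c_p x n theta th + R + Dgap M tau c_p T x n theta"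
      using main by (simp add: cost)
  next
    define S where "S = (SUP theta\<in>{0..}. ereal (Dgap M tau c_p T x n theta))"
    have npos: "real n > 0" using n by simp
    have S0: "ereal (Dgap M tau c_p T x n theta) \<le> S" if "theta \<ge> 0" for theta
      unfolding S_def using that by (intro SUP_upper) auto
    have Snn: "S \<ge> 0"
    proof -
      have "(0::ereal) \<le> ereal (Dgap M tau c_p T x n 0)" using D0[of 0] by simp
      also have "\<dots> \<le> S" by (rule S0) simp
      finally show ?thesis .
    qed
    have ne: "ereal R + S \<noteq> -\<infinity>" using Snn by auto
    show "eps_IC M tau c_p x n ((ereal R + S) / ereal (real n))"
      unfolding eps_IC_def
    proof (intro allI impI)
      fix theta th :: real assume "theta \<ge> 0" "th \<ge> 0"
      have "ereal (exp_cost M tau c_p x n theta theta)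
          \<le> ereal (exp_cost M tau c_p x n theta th) + (ereal R + ereal (Dgap M tau c_p T x n theta))"
        using main[OF \<open>theta \<ge> 0\<close> \<open>th \<ge> 0\<close>] by (simp add: cost)
      also have "\<dots> \<le> ereal (exp_cost M tau c_p x n theta th) + (ereal R + S)"
        by (intro add_left_mono S0 \<open>theta \<ge> 0\<close>)
      also have "ereal R + S = ereal (real n) * ((ereal R + S) / ereal (real n))"
        using ee[OF npos ne] by simp
      finally show "ereal (exp_cost M tau c_p x n theta theta)
        \<le> ereal (exp_cost M tau c_p x n theta th) + ereal (real n) * ((ereal R + S) / ereal (real n))" .
    qed
  qed
qed

end
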